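(* Let $P$ be a matrix as in the context, with column index set $\mathcal{F}$. Let $A\subseteq\mathcal{F}$ with $|A|=r+1$, $\det(P_A)\neq0$ and $A\cap\mathcal{F}'\neq\emptyset$. Then there exists $i_1\in\{0,\dots,r\}$ such that $|A\cap\mathcal{F}_{i_1}|=0$ and $|A\cap\mathcal{F}_i|=1$ for all $i\neq i_1$, and $|\det(P_A)|=\prod_{i\neq i_1}l_{ij_i}$, where $A\cap\mathcal{F}_i=\{f_{ij_i}\}$ for $i\ne i_1$.
   Context: Fix integers $r\ge1$, $n_0,\dots,n_r\ge1$, vectors $l_i\in\mathbb{Z}_{\ge1}^{n_i}$, $d_i\in\mathbb{Z}^{n_i}$ with $\gcd(l_{ij},d_{ij})=1$ and $d_{i1}/l_{i1}>\dots>d_{in_i}/l_{in_i}$. Let $e_1,\dots,e_{r+1}$ be the standard basis of $\mathbb{Z}^{r+1}$, $u=e_{r+1}$, $e_0=-(e_1+\dots+e_r)$, $v_{ij}=l_{ij}e_i+d_{ij}u$. Let $\mathcal{F}_i=\{f_{i1},\dots,f_{in_i}\}$, $\mathcal{F}'$ one of $\emptyset,\{f^+\},\{f^-\},\{f^+,f^-\}$ (types (ee),(pe),(ep),(pp)), $\mathcal{F}=\mathcal{F}_0\cup\dots\cup\mathcal{F}_r\cup\mathcal{F}'$, and $P$ the $(r+1)\times|\mathcal{F}|$ matrix with column $v_{ij}$ at $f_{ij}$, $u$ at $f^+$, $-u$ at $f^-$. For $|A|=r+1$, $P_A$ is the square submatrix of columns indexed by $A$. *)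

theory Defs
  imports "Jordan_Normal_Form.Determinant"
begin

text \<open>Column indices: F i j stands for f_{ij}, Fplus for f^+, Fminus for f^-.\<close>
datatype col = F nat nat | Fplus | Fminus

text \<open>Rows are indexed 0..r; row k corresponds to the coordinate of e_{k+1}
  (so row r is the coordinate of u = e_{r+1}).\<close>

definition ebasis :: "nat \<Rightarrow> nat \<Rightarrow> nat \<Rightarrow> int" where
  "ebasis r i k = (if i = 0 then (if k < r then -1 else 0) else (if k = i - 1 then 1 else 0))"

definition uvec :: "nat \<Rightarrow> nat \<Rightarrow> int" where
  "uvec r k = (if k = r then 1 else 0)"

fun Pent :: "nat \<Rightarrow> (nat \<Rightarrow> nat \<Rightarrow> int) \<Rightarrow> (nat \<Rightarrow> nat \<Rightarrow> int) \<Rightarrow> col \<Rightarrow> nat \<Rightarrow> int" where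
  "Pent r l d (F i j) k = l i j * ebasis r i k + d i j * uvec r k"
| "Pent r l d Fplus k = uvec r k"
| "Pent r l d Fminus k = - uvec r k"

definition Fi :: "(nat \<Rightarrow> nat) \<Rightarrow> nat \<Rightarrow> col set" where
  "Fi n i = {F i j | j. 1 \<le> j \<and> j \<le> n i}"

definition Fall :: "nat \<Rightarrow> (nat \<Rightarrow> nat) \<Rightarrow> col set \<Rightarrow> col set" where
  "Fall r n Fp = (\<Union>i\<in>{0..r}. Fi n i) \<union> Fp"

text \<open>P_A, where the column set A is enumerated by the distinct list cs.\<close>
definition subP :: "nat \<Rightarrow> (nat \<Rightarrow> nat \<Rightarrow> int) \<Rightarrow> (nat \<Rightarrow> nat \<Rightarrow> int) \<Rightarrow> col list \<Rightarrow> int mat" where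
  "subP r l d cs = mat (Suc r) (Suc r) (\<lambda>(k, m). Pent r l d (cs ! m) k)"

end

theory Submission
  imports Defs
begin
lemma abs_prod_int: "\<bar>prod (f :: 'b \<Rightarrow> int) A\<bar> = (\<Prod>x\<in>A. \<bar>f x\<bar>)"
  by (induct A rule: infinite_finite_induct) (auto simp: abs_mult)

lemma det_abs_unique:
  fixes M :: "int mat" and w :: "nat \<Rightarrow> int"
  assumes M: "M \<in> carrier_mat n n" and nz: "det M \<noteq> 0"
  and uniq: "\<And>p q. p permutes {0..<n} \<Longrightarrow> q permutes {0..<n} \<Longrightarrow>
     (\<Prod>i=0..<n. M $$ (i, p i)) \<noteq> 0 \<Longrightarrow> (\<Prod>i=0..<n. M $$ (i, q i)) \<noteq> 0 \<Longrightarrow> p = q"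
  and absw: "\<And>p k. p permutes {0..<n} \<Longrightarrow> (\<Prod>i=0..<n. M $$ (i, p i)) \<noteq> 0 \<Longrightarrow> k < n
     \<Longrightarrow> \<bar>M $$ (k, p k)\<bar> = w (p k)"
  shows "\<bar>det M\<bar> = (\<Prod>m=0..<n. w m)"
proof -
  let ?t = "\<lambda>p. signof p * (\<Prod>i=0..<n. M $$ (i, p i))"
  have d: "det M = (\<Sum>p\<in>{p. p permutes {0..<n}}. ?t p)" using det_def'[OF M] .
  have fin: "finite {p. p permutes {0..<n}}" using finite_permutations by auto
  from nz d obtain p where p: "p permutes {0..<n}" "?t p \<noteq> 0"
    by (metis (no_types, lifting) mem_Collect_eq sum.neutral)
  have pp: "(\<Prod>i=0..<n. M $$ (i, p i)) \<noteq> 0" using p(2) by auto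
  have "det M = ?t p + (\<Sum>q\<in>{p. p permutes {0..<n}} - {p}. ?t q)"
    unfolding d using fin p(1) by (simp add: sum.remove)
  also have "(\<Sum>q\<in>{p. p permutes {0..<n}} - {p}. ?t q) = 0"
  proof (rule sum.neutral, rule ballI)
    fix q assume "q \<in> {p. p permutes {0..<n}} - {p}"
    hence q: "q permutes {0..<n}" "q \<noteq> p" by auto
    show "?t q = 0"
    proof (rule ccontr)
      assume "?t q \<noteq> 0"
      hence "(\<Prod>i=0..<n. M $$ (i, q i)) \<noteq> 0" by auto
      with uniq[OF p(1) q(1) pp] q(2) show False by auto
    qed
  qed
  finally have "\<bar>det M\<bar> = (\<Prod>i=0..<n. \<bar>M $$ (i, p i)\<bar>)"
    by (simp add: abs_mult abs_prod_int)
  also have "\<dots> = (\<Prod>i=0..<n. w (p i))" using absw[OF p(1) pp] by (intro prod.cong) auto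
  also have "\<dots> = (\<Prod>m=0..<n. w m)" using prod.permute[OF p(1), of w] by simp
  finally show ?thesis .
qed

lemma det_dep:
  fixes M :: "int mat"
  assumes M: "M \<in> carrier_mat n n" and v: "v \<in> carrier_vec n" "v \<noteq> 0\<^sub>v n"
    and s: "\<forall>k<n. (\<Sum>m=0..<n. M $$ (k,m) * v $ m) = 0"
  shows "det M = 0"
proof -
  have "M *\<^sub>v v = 0\<^sub>v n"
  proof (rule eq_vecI)
    show "dim_vec (M *\<^sub>v v) = dim_vec (0\<^sub>v n)" using M by simp
    fix k assume "k < dim_vec (0\<^sub>v n)"
    hence k: "k < n" by simp
    have "(M *\<^sub>v v) $ k = row M k \<bullet> v" using M k by simp
    also have "\<dots> = (\<Sum>m=0..<n. M $$ (k,m) * v $ m)"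
      unfolding scalar_prod_def using M v k by (intro sum.cong) auto
    finally show "(M *\<^sub>v v) $ k = 0\<^sub>v n $ k" using s k by simp
  qed
  thus ?thesis using det_0_iff_vec_prod_zero[OF M] v by blast
qed

lemma sum_if3:
  fixes f :: "nat \<Rightarrow> int"
  assumes "m1 < N" "m2 < N" "m3 < N" "m1 \<noteq> m2" "m1 \<noteq> m3" "m2 \<noteq> m3"
  shows "(\<Sum>m=0..<N. f m * (if m = m1 then a else if m = m2 then b else if m = m3 then c else 0))
     = f m1 * a + f m2 * b + f m3 * c"
proof -
  have "(\<lambda>m. f m * (if m = m1 then a else if m = m2 then b else if m = m3 then c else 0)) =
    (\<lambda>m. (if m = m1 then f m1 * a else 0) + (if m = m2 then f m2 * b else 0) + (if m = m3 then f m3 * c else 0))"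
    using assms by (auto intro!: ext)
  hence "(\<Sum>m=0..<N. f m * (if m = m1 then a else if m = m2 then b else if m = m3 then c else 0)) =
    (\<Sum>m=0..<N. (if m = m1 then f m1 * a else 0) + (if m = m2 then f m2 * b else 0) + (if m = m3 then f m3 * c else 0))"
    by metis
  thus ?thesis using assms by (simp add: sum.distrib)
qed

lemma sum_if2:
  fixes f :: "nat \<Rightarrow> int"
  assumes "m1 < N" "m2 < N" "m1 \<noteq> m2"
  shows "(\<Sum>m=0..<N. f m * (if m = m1 then a else if m = m2 then b else 0))
     = f m1 * a + f m2 * b"
proof -
  have "(\<lambda>m. f m * (if m = m1 then a else if m = m2 then b else 0)) =
    (\<lambda>m. (if m = m1 then f m1 * a else 0) + (if m = m2 then f m2 * b else 0))"
    using assms by (auto intro!: ext)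
  hence "(\<Sum>m=0..<N. f m * (if m = m1 then a else if m = m2 then b else 0)) =
    (\<Sum>m=0..<N. (if m = m1 then f m1 * a else 0) + (if m = m2 then f m2 * b else 0))"
    by metis
  thus ?thesis using assms by (simp add: sum.distrib)
qed

lemma ebasis_nz:
  assumes "k < r" "i \<le> r" "ebasis r i k \<noteq> 0"
  shows "(i = 0 \<or> i = Suc k) \<and> \<bar>ebasis r i k\<bar> = 1"
  using assms by (auto simp: ebasis_def split: if_splits)

theorem lemma4p8:
  fixes r :: nat and n :: "nat \<Rightarrow> nat" and l d :: "nat \<Rightarrow> nat \<Rightarrow> int"
    and Fp A :: "col set" and cs :: "col list"
  assumes "r \<ge> 1"
    and "\<forall>i\<le>r. n i \<ge> 1"
    and "\<forall>i\<le>r. \<forall>j\<in>{1..n i}. l i j \<ge> 1 \<and> gcd (l i j) (d i j) = 1"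
    and "\<forall>i\<le>r. \<forall>j j'. 1 \<le> j \<and> j < j' \<and> j' \<le> n i \<longrightarrow>
           real_of_int (d i j) / real_of_int (l i j) > real_of_int (d i j') / real_of_int (l i j')"
    and "Fp \<subseteq> {Fplus, Fminus}"
    and "A \<subseteq> Fall r n Fp"
    and "card A = r + 1"
    and "distinct cs" and "set cs = A"
    and "det (subP r l d cs) \<noteq> 0"
    and "A \<inter> Fp \<noteq> {}"
  shows "\<exists>i1\<le>r. card (A \<inter> Fi n i1) = 0 \<and> (\<forall>i\<le>r. i \<noteq> i1 \<longrightarrow> card (A \<inter> Fi n i) = 1) \<and>
           (\<exists>js :: nat \<Rightarrow> nat. (\<forall>i\<le>r. i \<noteq> i1 \<longrightarrow> A \<inter> Fi n i = {F i (js i)}) \<and>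
              \<bar>det (subP r l d cs)\<bar> = (\<Prod>i\<in>{0..r} - {i1}. l i (js i)))"
proof -
  let ?M = "subP r l d cs"
  have len: "length cs = Suc r" using distinct_card assms(7,8,9) by fastforce
  have finA: "finite A" using assms(9) by auto
  have Mc: "?M \<in> carrier_mat (Suc r) (Suc r)" by (simp add: subP_def)
  have Me: "\<And>k m. k < Suc r \<Longrightarrow> m < Suc r \<Longrightarrow> ?M $$ (k,m) = Pent r l d (cs!m) k"
    by (simp add: subP_def)
  have csA: "\<And>m. m < Suc r \<Longrightarrow> cs!m \<in> A" using len assms(9) nth_mem by force
  have Aidx: "\<And>c. c \<in> A \<Longrightarrow> \<exists>m<Suc r. cs!m = c" using assms(9) len by (metis in_set_conv_nth)
  have csinj: "\<And>m m'. m < Suc r \<Longrightarrow> m' < Suc r \<Longrightarrow> cs!m = cs!m' \<Longrightarrow> m = m'"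
    using assms(8) len nth_eq_iff_index_eq by metis
  have dep: "\<And>v. v \<in> carrier_vec (Suc r) \<Longrightarrow> v \<noteq> 0\<^sub>v (Suc r) \<Longrightarrow>
      \<forall>k<Suc r. (\<Sum>m=0..<Suc r. ?M $$ (k,m) * v $ m) = 0 \<Longrightarrow> False"
    using det_dep[OF Mc] assms(10) by blast
  have uvr: "uvec r r = 1" and uvk: "\<And>k. k < r \<Longrightarrow> uvec r k = 0" by (auto simp: uvec_def)
  obtain c0 where c0: "c0 \<in> A" "c0 \<in> Fp" using assms(11) by auto
  hence c0pm: "c0 = Fplus \<or> c0 = Fminus" using assms(5) by auto
  define s :: int where "s = (if c0 = Fplus then 1 else -1)"
  have ss: "s * s = 1" by (simp add: s_def)
  have Pc0: "\<And>k. Pent r l d c0 k = s * uvec r k" using c0pm by (auto simp: s_def)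
  obtain m0 where m0: "m0 < Suc r" "cs!m0 = c0" using Aidx c0(1) by blast
  have notboth: "\<not> (Fplus \<in> A \<and> Fminus \<in> A)"
  proof
    assume h: "Fplus \<in> A \<and> Fminus \<in> A"
    then obtain m1 m2 where m1: "m1 < Suc r" "cs!m1 = Fplus" and m2: "m2 < Suc r" "cs!m2 = Fminus"
      using Aidx by blast
    hence ne: "m1 \<noteq> m2" by auto
    define v where "v = vec (Suc r) (\<lambda>m. if m = m1 then 1 else if m = m2 then 1 else (0::int))"
    show False
    proof (rule dep[of v])
      show "v \<in> carrier_vec (Suc r)" by (simp add: v_def)
      show "v \<noteq> 0\<^sub>v (Suc r)"
      proof
        assume "v = 0\<^sub>v (Suc r)"
        hence "v $ m1 = 0" using m1 by simp
        thus False using m1 by (simp add: v_def)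
      qed
      show "\<forall>k<Suc r. (\<Sum>m=0..<Suc r. ?M $$ (k,m) * v $ m) = 0"
      proof (intro allI impI)
        fix k assume k: "k < Suc r"
        have "(\<Sum>m=0..<Suc r. ?M $$ (k,m) * v $ m) =
          (\<Sum>m=0..<Suc r. ?M $$ (k,m) * (if m = m1 then 1 else if m = m2 then 1 else 0))"
          by (intro sum.cong) (auto simp: v_def)
        also have "\<dots> = ?M $$ (k,m1) * 1 + ?M $$ (k,m2) * 1"
          by (rule sum_if2[OF m1(1) m2(1) ne])
        also have "\<dots> = 0" using k m1 m2 Me by simp
        finally show "(\<Sum>m=0..<Suc r. ?M $$ (k,m) * v $ m) = 0" .
      qed
    qed
  qed
  have Arest: "\<And>c. c \<in> A \<Longrightarrow> c \<noteq> c0 \<Longrightarrow> \<exists>i j. c = F i j \<and> i \<le> r \<and> 1 \<le> j \<and> j \<le> n i"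
  proof -
    fix c assume c: "c \<in> A" "c \<noteq> c0"
    show "\<exists>i j. c = F i j \<and> i \<le> r \<and> 1 \<le> j \<and> j \<le> n i"
    proof (cases "c \<in> Fp")
      case True
      hence "c = Fplus \<or> c = Fminus" using assms(5) by auto
      thus ?thesis using c c0pm c0(1) notboth by auto
    next
      case False
      hence "c \<in> (\<Union>i\<in>{0..r}. Fi n i)" using c(1) assms(6) unfolding Fall_def by auto
      thus ?thesis unfolding Fi_def by auto
    qed
  qed
  have lpos: "\<And>i j. i \<le> r \<Longrightarrow> 1 \<le> j \<Longrightarrow> j \<le> n i \<Longrightarrow> l i j \<ge> 1" using assms(3) by auto
  have injA: "\<And>i j j'. F i j \<in> A \<Longrightarrow> F i j' \<in> A \<Longrightarrow> j = j'"
  proof (rule ccontr)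
    fix i j j' assume h: "F i j \<in> A" "F i j' \<in> A" "j \<noteq> j'"
    obtain m1 where m1: "m1 < Suc r" "cs!m1 = F i j" using Aidx h(1) by blast
    obtain m2 where m2: "m2 < Suc r" "cs!m2 = F i j'" using Aidx h(2) by blast
    have ne12: "m1 \<noteq> m2" using m1 m2 h(3) by auto
    have ne10: "m1 \<noteq> m0" "m2 \<noteq> m0" using m1 m2 m0 c0pm by auto
    have "F i j \<noteq> c0" using c0pm by auto
    then obtain ii jj where "F i j = F ii jj" "ii \<le> r" "1 \<le> jj" "jj \<le> n ii" using Arest h(1) by blast
    hence l1: "l i j \<ge> 1" using lpos by auto
    define L where "L = l i j"
    define L' where "L' = l i j'"
    define X where "X = - s * (L' * d i j - L * d i j')"
    define v where "v = vec (Suc r) (\<lambda>m. if m = m1 then L' else if m = m2 then - L else if m = m0 then X else 0)"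
    show False
    proof (rule dep[of v])
      show "v \<in> carrier_vec (Suc r)" by (simp add: v_def)
      show "v \<noteq> 0\<^sub>v (Suc r)"
      proof
        assume "v = 0\<^sub>v (Suc r)"
        hence "v $ m2 = 0" using m2 by simp
        thus False using m2 ne12 l1 by (simp add: v_def L_def)
      qed
      show "\<forall>k<Suc r. (\<Sum>m=0..<Suc r. ?M $$ (k,m) * v $ m) = 0"
      proof (intro allI impI)
        fix k assume k: "k < Suc r"
        have "(\<Sum>m=0..<Suc r. ?M $$ (k,m) * v $ m) =
          (\<Sum>m=0..<Suc r. ?M $$ (k,m) * (if m = m1 then L' else if m = m2 then - L else if m = m0 then X else 0))"
          by (intro sum.cong) (auto simp: v_def)
        also have "\<dots> = ?M $$ (k,m1) * L' + ?M $$ (k,m2) * (- L) + ?M $$ (k,m0) * X"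
          by (rule sum_if3[OF m1(1) m2(1) m0(1) ne12 ne10])
        also have "\<dots> = (L * ebasis r i k + d i j * uvec r k) * L' - (L' * ebasis r i k + d i j' * uvec r k) * L
            + s * uvec r k * X"
          using k m1 m2 m0 Me Pc0 by (simp add: L_def L'_def)
        also have "\<dots> = uvec r k * (d i j * L' - d i j' * L) * (1 - s * s)"
          by (simp add: X_def algebra_simps)
        also have "\<dots> = 0" using ss by simp
        finally show "(\<Sum>m=0..<Suc r. ?M $$ (k,m) * v $ m) = 0" .
      qed
    qed
  qed
  define grp where "grp c = (case c of F i j \<Rightarrow> i | _ \<Rightarrow> 0)" for c
  let ?B = "A - {c0}"
  have cardB: "card ?B = r" using assms(7) c0(1) finA by simp
  have inj_grp: "inj_on grp ?B"
  proof (rule inj_onI)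
    fix x y assume x: "x \<in> ?B" and y: "y \<in> ?B" and g: "grp x = grp y"
    obtain i j where xi: "x = F i j" using Arest x by blast
    obtain i' j' where yi: "y = F i' j'" using Arest y by blast
    have "i = i'" using g xi yi by (simp add: grp_def)
    thus "x = y" using injA x y xi yi by auto
  qed
  have grp_img: "grp ` ?B \<subseteq> {0..r}"
  proof
    fix g assume "g \<in> grp ` ?B"
    then obtain x where x: "x \<in> ?B" "g = grp x" by blast
    then obtain i j where "x = F i j" "i \<le> r" using Arest by blast
    thus "g \<in> {0..r}" using x by (simp add: grp_def)
  qed
  have "card (grp ` ?B) = r" using card_image[OF inj_grp] cardB by simp
  hence "card ({0..r} - grp ` ?B) = 1" using card_Diff_subset[OF _ grp_img] finite_subset[OF grp_img] by simp
  then obtain i1 where i1: "{0..r} - grp ` ?B = {i1}" by (meson card_1_singletonE)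
  have i1r: "i1 \<le> r" and i1n: "i1 \<notin> grp ` ?B" using i1 by auto
  have ingrp: "\<And>i. i \<le> r \<Longrightarrow> i \<noteq> i1 \<Longrightarrow> i \<in> grp ` ?B" using i1 by auto
  define js where "js i = (SOME j. F i j \<in> A)" for i
  have jsA: "\<And>i. i \<le> r \<Longrightarrow> i \<noteq> i1 \<Longrightarrow> F i (js i) \<in> A"
  proof -
    fix i assume "i \<le> r" "i \<noteq> i1"
    then obtain x where x: "x \<in> ?B" "i = grp x" using ingrp by blast
    then obtain ii j where "x = F ii j" using Arest by blast
    hence "F i j \<in> A" using x by (simp add: grp_def)
    thus "F i (js i) \<in> A" unfolding js_def by (rule someI)
  qed
  have FnC0: "\<And>i j. F i j \<noteq> c0" using c0pm by auto
  have AFi: "\<And>i. i \<le> r \<Longrightarrow> i \<noteq> i1 \<Longrightarrow> A \<inter> Fi n i = {F i (js i)}"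
  proof -
    fix i assume i: "i \<le> r" "i \<noteq> i1"
    have a: "F i (js i) \<in> A" using jsA[OF i] .
    then obtain ii jj where "F i (js i) = F ii jj" "1 \<le> jj" "jj \<le> n ii" using Arest FnC0 by blast
    hence "F i (js i) \<in> Fi n i" unfolding Fi_def by auto
    moreover have "\<And>x. x \<in> A \<Longrightarrow> x \<in> Fi n i \<Longrightarrow> x = F i (js i)"
      using injA a unfolding Fi_def by blast
    ultimately show "A \<inter> Fi n i = {F i (js i)}" using a by blast
  qed
  have AFi1: "A \<inter> Fi n i1 = {}"
  proof (rule ccontr)
    assume "A \<inter> Fi n i1 \<noteq> {}"
    then obtain j where "F i1 j \<in> A" unfolding Fi_def by blast
    hence "F i1 j \<in> ?B" using FnC0 by auto
    hence "grp (F i1 j) \<in> grp ` ?B" by blast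
    thus False using i1n by (simp add: grp_def)
  qed
  define colw where "colw c = (case c of F i j \<Rightarrow> l i j | _ \<Rightarrow> 1)" for c
  have colF: "\<And>m. m < Suc r \<Longrightarrow> m \<noteq> m0 \<Longrightarrow> \<exists>i j. cs!m = F i j \<and> i \<le> r \<and> l i j \<ge> 1"
  proof -
    fix m assume m: "m < Suc r" "m \<noteq> m0"
    hence "cs!m \<noteq> c0" using csinj m0 by metis
    then obtain i j where "cs!m = F i j" "i \<le> r" "1 \<le> j" "j \<le> n i" using Arest csA m(1) by blast
    thus "\<exists>i j. cs!m = F i j \<and> i \<le> r \<and> l i j \<ge> 1" using lpos by blast
  qed
  have colinj: "\<And>m m' i j j'. m < Suc r \<Longrightarrow> m' < Suc r \<Longrightarrow> cs!m = F i j \<Longrightarrow> cs!m' = F i j' \<Longrightarrow> m = m'"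
    using injA csA csinj by metis
  let ?P = "\<lambda>p. p permutes {0..<Suc r} \<and> (\<Prod>i=0..<Suc r. ?M $$ (i, p i)) \<noteq> 0"
  have nzp: "\<And>p k. ?P p \<Longrightarrow> k < Suc r \<Longrightarrow> ?M $$ (k, p k) \<noteq> 0"
  proof
    fix p k assume P: "?P p" and k: "k < Suc r" and z: "?M $$ (k, p k) = 0"
    have "(\<Prod>i=0..<Suc r. ?M $$ (i, p i)) = 0" by (rule prod_zero) (use k z in auto)
    thus False using P by simp
  qed
  have pin: "\<And>p k. p permutes {0..<Suc r} \<Longrightarrow> k < Suc r \<Longrightarrow> p k < Suc r"
    using permutes_in_image by fastforce
  have pr: "\<And>p. ?P p \<Longrightarrow> p r = m0"
  proof -
    fix p assume P: "?P p"
    define k where "k = inv_into UNIV p m0"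
    have pk: "p k = m0" unfolding k_def using P permutes_inverses(1) by fastforce
    have k: "k < Suc r" unfolding k_def using P permutes_inv pin m0(1) by blast
    have "?M $$ (k, m0) \<noteq> 0" using nzp[OF P k] pk by simp
    hence "uvec r k \<noteq> 0" using Me[OF k m0(1)] m0 Pc0 by simp
    hence "k = r" by (simp add: uvec_def split: if_splits)
    thus "p r = m0" using pk by simp
  qed
  have grpk: "\<And>p k. ?P p \<Longrightarrow> k < r \<Longrightarrow> \<exists>i j. cs!(p k) = F i j \<and> (i = 0 \<or> i = Suc k) \<and>
      \<bar>?M $$ (k, p k)\<bar> = l i j"
  proof -
    fix p k assume P: "?P p" and k: "k < r"
    have "p k \<noteq> m0"
    proof
      assume "p k = m0"
      hence "p k = p r" using pr[OF P] by simp
      thus False using P k permutes_inj[of p] by (metis inj_def less_irrefl)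
    qed
    moreover have pk: "p k < Suc r" using pin P k by auto
    ultimately obtain i j where ij: "cs!(p k) = F i j" "i \<le> r" "l i j \<ge> 1" using colF by blast
    have e: "?M $$ (k, p k) = l i j * ebasis r i k" using Me[of k "p k"] k pk ij uvk by simp
    hence "ebasis r i k \<noteq> 0" using nzp[OF P, of k] k by auto
    from ebasis_nz[OF k ij(2) this] have "(i = 0 \<or> i = Suc k)" "\<bar>ebasis r i k\<bar> = 1" by auto
    moreover have "\<bar>?M $$ (k, p k)\<bar> = l i j" using e ij(3) \<open>\<bar>ebasis r i k\<bar> = 1\<close> by (simp add: abs_mult)
    ultimately show "\<exists>i j. cs!(p k) = F i j \<and> (i = 0 \<or> i = Suc k) \<and> \<bar>?M $$ (k, p k)\<bar> = l i j"
      using ij by blast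
  qed
  have key: "\<And>p q x j. ?P p \<Longrightarrow> ?P q \<Longrightarrow> x < r \<Longrightarrow> cs!(p x) = F (Suc x) j \<Longrightarrow> q x = p x"
  proof -
    fix p q x j assume P: "?P p" and Q: "?P q" and x: "x < r" and c: "cs!(p x) = F (Suc x) j"
    define k where "k = inv_into UNIV q (p x)"
    have px: "p x < Suc r" using pin P x by auto
    have qk: "q k = p x" unfolding k_def using Q permutes_inverses(1) by fastforce
    have k: "k < Suc r" unfolding k_def using Q permutes_inv pin px by blast
    have "k \<noteq> r"
    proof
      assume "k = r"
      hence "p x = m0" using qk pr[OF Q] by simp
      thus False using c m0(2) FnC0[of "Suc x" j] by simp
    qed
    hence "k < r" using k by simp
    from grpk[OF Q this] obtain i' j' where "cs!(q k) = F i' j'" "i' = 0 \<or> i' = Suc k" by blast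
    hence "k = x" using qk c by auto
    thus "q x = p x" using qk by simp
  qed
  have uniq: "\<And>p q. ?P p \<Longrightarrow> ?P q \<Longrightarrow> p = q"
  proof
    fix p q x assume P: "?P p" and Q: "?P q"
    show "p x = q x"
    proof (cases "x < r")
      case True
      obtain i j where pi: "cs!(p x) = F i j" "i = 0 \<or> i = Suc x" using grpk[OF P True] by blast
      obtain i' j' where qi: "cs!(q x) = F i' j'" "i' = 0 \<or> i' = Suc x" using grpk[OF Q True] by blast
      show ?thesis
      proof (cases "i = Suc x")
        case True
        thus ?thesis using key[OF P Q \<open>x < r\<close>] pi by auto
      next
        case False
        show ?thesis
        proof (cases "i' = Suc x")
          case True
          thus ?thesis using key[OF Q P \<open>x < r\<close>] qi by auto
        next
          case False
          hence "i = i'" using pi qi \<open>i \<noteq> Suc x\<close> by auto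
          thus ?thesis using colinj pi qi pin P Q \<open>x < r\<close> by (metis less_SucI)
        qed
      qed
    next
      case False
      show ?thesis
      proof (cases "x = r")
        case True
        thus ?thesis using pr[OF P] pr[OF Q] by simp
      next
        case False
        hence "x \<notin> {0..<Suc r}" using \<open>\<not> x < r\<close> by auto
        thus ?thesis using P Q permutes_not_in by metis
      qed
    qed
  qed
  have absw: "\<And>p k. ?P p \<Longrightarrow> k < Suc r \<Longrightarrow> \<bar>?M $$ (k, p k)\<bar> = colw (cs!(p k))"
  proof -
    fix p k assume P: "?P p" and k: "k < Suc r"
    show "\<bar>?M $$ (k, p k)\<bar> = colw (cs!(p k))"
    proof (cases "k < r")
      case True
      thus ?thesis using grpk[OF P True] by (auto simp: colw_def)
    next
      case False
      hence "k = r" using k by simp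
      thus ?thesis using pr[OF P] Me[OF k m0(1)] m0 Pc0 uvr c0pm
        by (auto simp: colw_def s_def)
    qed
  qed
  have detw: "\<bar>det ?M\<bar> = (\<Prod>m=0..<Suc r. colw (cs!m))"
    by (rule det_abs_unique[OF Mc assms(10)]) (use uniq absw in blast)+
  have imgcs: "(\<lambda>m. cs!m) ` {0..<Suc r} = A"
    using assms(9) len by (auto simp: in_set_conv_nth)
  have "(\<Prod>m=0..<Suc r. colw (cs!m)) = (\<Prod>c\<in>A. colw c)"
    using prod.reindex[OF inj_on_nth[OF assms(8)], of "{0..<Suc r}" colw] imgcs len by simp
  also have "\<dots> = colw c0 * (\<Prod>c\<in>?B. colw c)" using prod.remove[OF finA c0(1)] by simp
  also have "colw c0 = 1" using c0pm by (auto simp: colw_def)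
  also have "?B = (\<lambda>i. F i (js i)) ` ({0..r} - {i1})"
  proof
    show "?B \<subseteq> (\<lambda>i. F i (js i)) ` ({0..r} - {i1})"
    proof
      fix c assume c: "c \<in> ?B"
      then obtain i j where ij: "c = F i j" "i \<le> r" using Arest by blast
      have "i \<noteq> i1" using i1n c ij by (force simp: grp_def)
      hence "j = js i" using injA jsA ij c by blast
      thus "c \<in> (\<lambda>i. F i (js i)) ` ({0..r} - {i1})" using ij \<open>i \<noteq> i1\<close> by auto
    qed
    show "(\<lambda>i. F i (js i)) ` ({0..r} - {i1}) \<subseteq> ?B" using jsA FnC0 by auto
  qed
  also have "(\<Prod>c\<in>(\<lambda>i. F i (js i)) ` ({0..r} - {i1}). colw c) = (\<Prod>i\<in>{0..r} - {i1}. l i (js i))"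
    by (subst prod.reindex) (auto simp: inj_on_def colw_def)
  finally have "\<bar>det ?M\<bar> = (\<Prod>i\<in>{0..r} - {i1}. l i (js i))" using detw by simp
  moreover have "card (A \<inter> Fi n i1) = 0" using AFi1 by simp
  moreover have "\<forall>i\<le>r. i \<noteq> i1 \<longrightarrow> card (A \<inter> Fi n i) = 1" using AFi by simp
  ultimately show ?thesis using i1r AFi by blast
qed

end
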